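(* Let $L:\mathbb{R}^k\to\mathbb{R}^m$ be linear. If $t(L)>\frac{15}{16}2^{k-1}$ and $t(L)\neq 2^{k-1}$, then $L(e_i)\in\{-1,0,1\}^m$ for every $i\in[k]$.
   Context: $\mathbb{H}^n=\{0,1\}^n$, $e_1,\dots,e_k$ is the standard basis of $\mathbb{R}^k$, and $t(L)=|L^{-1}(\mathbb{H}^m)\cap\mathbb{H}^k|$. *)

theory Defs
  imports "HOL-Analysis.Analysis"
begin

definition hcube :: "(real ^ 'n) set" where
  "hcube = {x. \<forall>i. x $ i \<in> {0, 1}}"

definition tcount :: "(real ^ 'k \<Rightarrow> real ^ 'm) \<Rightarrow> nat" where
  "tcount L = card {x \<in> (hcube :: (real ^ 'k) set). L x \<in> (hcube :: (real ^ 'm) set)}"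

end

theory Submission
  imports Defs
begin

inductive cpoly :: "nat \<Rightarrow> ('a set \<Rightarrow> real) \<Rightarrow> bool" where
  pc: "cpoly d (\<lambda>Y. c)"
| padd: "cpoly d F \<Longrightarrow> cpoly d G \<Longrightarrow> cpoly d (\<lambda>Y. F Y + G Y)"
| pind: "cpoly d F \<Longrightarrow> cpoly (Suc d) (\<lambda>Y. if l \<in> Y then F Y else 0)"

lemma cpoly_mono: "cpoly d F \<Longrightarrow> d \<le> e \<Longrightarrow> cpoly e F"
proof (induction arbitrary: e rule: cpoly.induct)
  case (pc d c) then show ?case by (simp add: cpoly.pc)
next
  case (padd d F G) then show ?case by (simp add: cpoly.padd)
next
  case (pind d F l)
  then obtain e' where "e = Suc e'" "d \<le> e'" by (cases e) auto
  then show ?case using pind by (simp add: cpoly.pind)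
qed

lemma cpoly_scale: "cpoly d F \<Longrightarrow> cpoly d (\<lambda>Y. c * F Y)"
proof (induction rule: cpoly.induct)
  case (pc d c') then show ?case by (simp add: cpoly.pc)
next
  case (padd d F G) then show ?case using cpoly.padd[OF padd.IH] by (simp add: distrib_left)
next
  case (pind d F l)
  have "(\<lambda>Y. c * (if l \<in> Y then F Y else 0)) = (\<lambda>Y. if l \<in> Y then c * F Y else 0)" by auto
  then show ?case using cpoly.pind[OF pind.IH] by simp
qed

lemma cpoly_sum: "finite I \<Longrightarrow> (\<forall>l\<in>I. cpoly d (G l)) \<Longrightarrow> cpoly d (\<lambda>Y. \<Sum>l\<in>I. G l Y)"
proof (induction I rule: finite_induct)
  case empty then show ?case using cpoly.pc[of d 0] by simp
next
  case (insert x F) then show ?case using cpoly.padd[of d "G x" "\<lambda>Y. \<Sum>l\<in>F. G l Y"] by simp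
qed

lemma cpoly_comp: "cpoly d F \<Longrightarrow> (\<forall>m. (\<forall>Y. m \<in> \<phi> Y \<longleftrightarrow> m \<in> Y) \<or> (\<forall>Y. m \<in> \<phi> Y) \<or> (\<forall>Y. m \<notin> \<phi> Y))
   \<Longrightarrow> cpoly d (\<lambda>Y. F (\<phi> Y))"
proof (induction rule: cpoly.induct)
  case (pc d c) then show ?case by (simp add: cpoly.pc)
next
  case (padd d F G) then show ?case by (simp add: cpoly.padd)
next
  case (pind d F l)
  have IH: "cpoly d (\<lambda>Y. F (\<phi> Y))" using pind by simp
  consider "\<forall>Y. l \<in> \<phi> Y \<longleftrightarrow> l \<in> Y" | "\<forall>Y. l \<in> \<phi> Y" | "\<forall>Y. l \<notin> \<phi> Y" using pind.prems by blast
  then show ?case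
  proof cases
    case 1
    then have "(\<lambda>Y. if l \<in> \<phi> Y then F (\<phi> Y) else 0) = (\<lambda>Y. if l \<in> Y then F (\<phi> Y) else 0)" by auto
    then show ?thesis using cpoly.pind[OF IH] by simp
  next
    case 2
    then have "(\<lambda>Y. if l \<in> \<phi> Y then F (\<phi> Y) else 0) = (\<lambda>Y. F (\<phi> Y))" by auto
    then show ?thesis using cpoly_mono[OF IH, of "Suc d"] by simp
  next
    case 3
    then have "(\<lambda>Y. if l \<in> \<phi> Y then F (\<phi> Y) else 0) = (\<lambda>Y. 0)" by auto
    then show ?thesis using cpoly.pc by simp
  qed
qed

lemma cpoly_delta: "cpoly d F \<Longrightarrow> cpoly (d - 1) (\<lambda>Y. F (insert l Y) - F (Y - {l}))
   \<and> (d = 0 \<longrightarrow> (\<forall>Y. F (insert l Y) - F (Y - {l}) = 0))"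
proof (induction rule: cpoly.induct)
  case (pc d c) then show ?case using cpoly.pc[of "d - 1" 0] by simp
next
  case (padd d F G)
  have "(\<lambda>Y. F (insert l Y) + G (insert l Y) - (F (Y - {l}) + G (Y - {l}))) =
        (\<lambda>Y. (F (insert l Y) - F (Y - {l})) + (G (insert l Y) - G (Y - {l})))" by (simp add: algebra_simps)
  then show ?case using padd cpoly.padd[of "d - 1" "\<lambda>Y. F (insert l Y) - F (Y - {l})" "\<lambda>Y. G (insert l Y) - G (Y - {l})"]
    by simp
next
  case (pind d F m)
  show ?case
  proof (cases "m = l")
    case True
    have "(\<lambda>Y. (if m \<in> insert l Y then F (insert l Y) else 0) - (if m \<in> Y - {l} then F (Y - {l}) else 0))
        = (\<lambda>Y. F (insert l Y))" using True by auto
    moreover have "cpoly d (\<lambda>Y. F (insert l Y))"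
      by (rule cpoly_comp[OF pind.hyps]) auto
    ultimately show ?thesis by simp
  next
    case False
    have eq: "(\<lambda>Y. (if m \<in> insert l Y then F (insert l Y) else 0) - (if m \<in> Y - {l} then F (Y - {l}) else 0))
        = (\<lambda>Y. if m \<in> Y then F (insert l Y) - F (Y - {l}) else 0)" using False by auto
    show ?thesis
    proof (cases "d = 0")
      case True
      then have "(\<lambda>Y. if m \<in> Y then F (insert l Y) - F (Y - {l}) else 0) = (\<lambda>Y. 0)" using pind.IH by auto
      then show ?thesis using eq cpoly.pc by simp
    next
      case False
      then show ?thesis using eq cpoly.pind[of "d - 1" _ m] pind.IH by simp
    qed
  qed
qed

lemma cpoly_affine: "cpoly d F \<Longrightarrow> finite I \<Longrightarrow>
  cpoly (Suc d) (\<lambda>Y. F Y * (\<beta> + (\<Sum>l\<in>I. if l \<in> Y then \<gamma> l else 0)))"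
proof -
  assume F: "cpoly d F" and I: "finite I"
  have eq: "(\<lambda>Y. F Y * (\<beta> + (\<Sum>l\<in>I. if l \<in> Y then \<gamma> l else 0))) =
     (\<lambda>Y. \<beta> * F Y + (\<Sum>l\<in>I. if l \<in> Y then \<gamma> l * F Y else 0))"
    by (rule ext) (simp add: algebra_simps sum_distrib_left sum_distrib_right if_distrib cong: if_cong)
  have 1: "cpoly (Suc d) (\<lambda>Y. \<beta> * F Y)" using cpoly_mono[OF cpoly_scale[OF F]] by simp
  have 2: "cpoly (Suc d) (\<lambda>Y. \<Sum>l\<in>I. if l \<in> Y then \<gamma> l * F Y else 0)"
    using I by (intro cpoly_sum) (auto intro: cpoly.pind cpoly_scale[OF F])
  show ?thesis unfolding eq by (rule cpoly.padd[OF 1 2])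
qed

lemma count_split:
  assumes "l \<notin> I" and that: "finite I"
  shows "card {Y. Y \<subseteq> insert l I \<and> F Y \<noteq> 0} =
    card {Y. Y \<subseteq> I \<and> F (Y - {l}) \<noteq> 0} + card {Y. Y \<subseteq> I \<and> F (insert l Y) \<noteq> 0}"
proof -
  let ?A = "{Y. Y \<subseteq> I \<and> F (Y - {l}) \<noteq> 0}" and ?B = "{Y. Y \<subseteq> I \<and> F (insert l Y) \<noteq> 0}"
  have fA: "finite ?A" using that by (auto intro: finite_subset[of _ "Pow I"])
  have fB: "finite ?B" using that by (auto intro: finite_subset[of _ "Pow I"])
  have inj: "inj_on (insert l) ?B" using assms unfolding inj_on_def
    by (metis (mono_tags) Diff_insert_absorb mem_Collect_eq subsetD)
  have eq: "{Y. Y \<subseteq> insert l I \<and> F Y \<noteq> 0} = ?A \<union> insert l ` ?B"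
  proof (rule set_eqI, rule iffI)
    fix Y assume Y: "Y \<in> {Y. Y \<subseteq> insert l I \<and> F Y \<noteq> 0}"
    show "Y \<in> ?A \<union> insert l ` ?B"
    proof (cases "l \<in> Y")
      case True
      then have "Y = insert l (Y - {l})" by auto
      moreover have "Y - {l} \<in> ?B" using Y True by (auto simp: insert_absorb)
      ultimately show ?thesis by blast
    next
      case False then show ?thesis using Y by auto
    qed
  next
    fix Y assume "Y \<in> ?A \<union> insert l ` ?B"
    moreover have "\<forall>Z. Z \<subseteq> I \<longrightarrow> Z - {l} = Z" using assms by auto
    ultimately show "Y \<in> {Y. Y \<subseteq> insert l I \<and> F Y \<noteq> 0}" using assms by (auto simp: subset_insert)
  qed
  have disj: "?A \<inter> insert l ` ?B = {}" using assms by auto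
  have "card (?A \<union> insert l ` ?B) = card ?A + card (insert l ` ?B)"
    by (rule card_Un_disjoint) (use fA fB disj in auto)
  also have "card (insert l ` ?B) = card ?B" by (rule card_image[OF inj])
  finally show ?thesis using eq by simp
qed

lemma count_lemma:
  "finite I \<Longrightarrow> cpoly d F \<Longrightarrow> Y0 \<subseteq> I \<Longrightarrow> F Y0 \<noteq> 0 \<Longrightarrow>
   2 ^ card I \<le> 2 ^ d * card {Y. Y \<subseteq> I \<and> F Y \<noteq> 0}"
proof (induction I arbitrary: F d Y0 rule: finite_induct)
  case empty
  then have "{Y. Y \<subseteq> {} \<and> F Y \<noteq> 0} = {{}}" by auto
  then show ?case by simp
next
  case (insert l I)
  let ?F0 = "\<lambda>Y. F (Y - {l})" and ?F1 = "\<lambda>Y. F (insert l Y)"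
  let ?c0 = "card {Y. Y \<subseteq> I \<and> ?F0 Y \<noteq> 0}" and ?c1 = "card {Y. Y \<subseteq> I \<and> ?F1 Y \<noteq> 0}"
  have P0: "cpoly d ?F0" by (rule cpoly_comp[OF insert.prems(1)]) auto
  have P1: "cpoly d ?F1" by (rule cpoly_comp[OF insert.prems(1)]) auto
  have split: "card {Y. Y \<subseteq> insert l I \<and> F Y \<noteq> 0} = ?c0 + ?c1"
    by (rule count_split[OF insert.hyps(2) insert.hyps(1)])
  have D: "cpoly (d - 1) (\<lambda>Y. F (insert l Y) - F (Y - {l})) \<and> (d = 0 \<longrightarrow> (\<forall>Y. F (insert l Y) - F (Y - {l}) = 0))"
    by (rule cpoly_delta[OF insert.prems(1)])
  have ex: "(\<exists>Y\<subseteq>I. ?F0 Y \<noteq> 0) \<or> (\<exists>Y\<subseteq>I. ?F1 Y \<noteq> 0)"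
  proof (cases "l \<in> Y0")
    case True
    then have "?F1 (Y0 - {l}) \<noteq> 0" using insert.prems by (simp add: insert_absorb)
    moreover have "Y0 - {l} \<subseteq> I" using insert.prems by auto
    ultimately show ?thesis by blast
  next
    case False
    then have "?F0 Y0 \<noteq> 0" using insert.prems by simp
    moreover have "Y0 \<subseteq> I" using insert.prems False by auto
    ultimately show ?thesis by blast
  qed
  consider (both) "\<exists>Y\<subseteq>I. ?F0 Y \<noteq> 0" "\<exists>Y\<subseteq>I. ?F1 Y \<noteq> 0"
    | (z0) "\<forall>Y\<subseteq>I. ?F0 Y = 0" "\<exists>Y\<subseteq>I. ?F1 Y \<noteq> 0"
    | (z1) "\<exists>Y\<subseteq>I. ?F0 Y \<noteq> 0" "\<forall>Y\<subseteq>I. ?F1 Y = 0"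
    using ex by blast
  then show ?case
  proof cases
    case both
    then obtain Ya Yb where "Ya \<subseteq> I" "?F0 Ya \<noteq> 0" "Yb \<subseteq> I" "?F1 Yb \<noteq> 0" by blast
    then have "2 ^ card I \<le> 2 ^ d * ?c0" "2 ^ card I \<le> 2 ^ d * ?c1"
      using insert.IH[OF P0] insert.IH[OF P1] by blast+
    then show ?thesis using split insert.hyps by (simp add: algebra_simps)
  next
    case z0
    then obtain Yb where Yb: "Yb \<subseteq> I" "?F1 Yb \<noteq> 0" by blast
    have d0: "d \<noteq> 0" using D z0 Yb by force
    have eqs: "{Y. Y \<subseteq> I \<and> F (insert l Y) - F (Y - {l}) \<noteq> 0} = {Y. Y \<subseteq> I \<and> ?F1 Y \<noteq> 0}"
      using z0 by auto
    have "2 ^ card I \<le> 2 ^ (d - 1) * ?c1"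
      using insert.IH[of "d - 1" "\<lambda>Y. F (insert l Y) - F (Y - {l})" Yb] D Yb z0 eqs by auto
    then have "2 * 2 ^ card I \<le> 2 * 2 ^ (d - 1) * ?c1" by simp
    also have "2 * 2 ^ (d - 1) = (2::nat) ^ d" using d0 by (cases d) auto
    also have "2 ^ d * ?c1 \<le> 2 ^ d * (?c0 + ?c1)" by simp
    finally show ?thesis using split insert.hyps by simp
  next
    case z1
    then obtain Ya where Ya: "Ya \<subseteq> I" "?F0 Ya \<noteq> 0" by blast
    have d0: "d \<noteq> 0" using D z1 Ya by force
    have eqs: "{Y. Y \<subseteq> I \<and> (-1) * (F (insert l Y) - F (Y - {l})) \<noteq> 0} = {Y. Y \<subseteq> I \<and> ?F0 Y \<noteq> 0}"
      using z1 by auto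
    have Pn: "cpoly (d - 1) (\<lambda>Y. (-1) * (F (insert l Y) - F (Y - {l})))"
      using cpoly_scale[of "d - 1" "\<lambda>Y. F (insert l Y) - F (Y - {l})" "-1"] D by blast
    have nz: "(-1) * (F (insert l Ya) - F (Ya - {l})) \<noteq> 0" using Ya z1 by simp
    have "2 ^ card I \<le> 2 ^ (d - 1) * card {Y. Y \<subseteq> I \<and> (-1) * (F (insert l Y) - F (Y - {l})) \<noteq> 0}"
      by (rule insert.IH[OF Pn Ya(1) nz])
    then have "2 ^ card I \<le> 2 ^ (d - 1) * ?c0" unfolding eqs .
    then have "2 * 2 ^ card I \<le> 2 * 2 ^ (d - 1) * ?c0" by simp
    also have "2 * 2 ^ (d - 1) = (2::nat) ^ d" using d0 by (cases d) auto
    also have "2 ^ d * ?c0 \<le> 2 ^ d * (?c0 + ?c1)" by simp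
    finally show ?thesis using split insert.hyps by simp
  qed
qed

theorem lemma4p3:
  fixes L :: "real ^ 'k \<Rightarrow> real ^ 'm"
  assumes "linear L"
    and "real (tcount L) > 15 / 16 * 2 ^ (CARD('k) - 1)"
    and "tcount L \<noteq> 2 ^ (CARD('k) - 1)"
  shows "\<forall>i. \<forall>j. L (axis i 1) $ j \<in> {-1, 0, 1}"
proof (rule ccontr)
  assume "\<not> ?thesis"
  then obtain i j where bad: "L (axis i 1) $ j \<notin> {-1, 0, 1}" by blast
  define A where "A r l = L (axis l 1) $ r" for r l
  define vv :: "'k set \<Rightarrow> real ^ 'k" where "vv Y = (\<chi> l. if l \<in> Y then 1 else 0)" for Y
  have Lvv: "L (vv Y) $ r = (\<Sum>l\<in>Y. A r l)" for Y r
  proof -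
    have "vv Y = (\<Sum>l\<in>Y. axis l 1)"
      by (simp add: vec_eq_iff vv_def axis_def)
    then have "L (vv Y) = (\<Sum>l\<in>Y. L (axis l 1))"
      using linear_sum[OF assms(1)] by (simp add: o_def)
    then show ?thesis by (simp add: A_def)
  qed
  define good where "good Y \<longleftrightarrow> (\<forall>r. (\<Sum>l\<in>Y. A r l) \<in> {0, 1})" for Y
  have inj: "inj vv"
  proof (rule injI)
    fix Y Z assume "vv Y = vv Z"
    then have "\<And>l. vv Y $ l = vv Z $ l" by simp
    then have "\<And>l. (if l \<in> Y then 1 else 0 :: real) = (if l \<in> Z then 1 else 0)" unfolding vv_def by simp
    then show "Y = Z" by (metis (full_types) zero_neq_one subsetI subset_antisym)
  qed
  have img: "{x \<in> (hcube :: (real ^ 'k) set). L x \<in> (hcube :: (real ^ 'm) set)} = vv ` {Y. good Y}"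
  proof (rule set_eqI, rule iffI)
    fix x assume x: "x \<in> {x \<in> (hcube :: (real ^ 'k) set). L x \<in> (hcube :: (real ^ 'm) set)}"
    have xeq: "x = vv {l. x $ l = 1}"
    unfolding vec_eq_iff proof (intro allI)
      fix l
      have "x $ l \<in> {0, 1}" using x by (simp add: hcube_def)
      then show "x $ l = vv {l. x $ l = 1} $ l" by (auto simp: vv_def)
    qed
    moreover have "good {l. x $ l = 1}" unfolding good_def
    proof
      fix r
      have "L x \<in> hcube" using x by simp
      then have "L x $ r \<in> {0, 1}" by (simp add: hcube_def)
      then have "L (vv {l. x $ l = 1}) $ r \<in> {0, 1}" by (simp only: xeq[symmetric])
      then show "(\<Sum>l\<in>{l. x $ l = 1}. A r l) \<in> {0, 1}" by (simp only: Lvv)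
    qed
    ultimately show "x \<in> vv ` {Y. good Y}" by blast
  next
    fix x assume "x \<in> vv ` {Y. good Y}"
    then obtain Y where "x = vv Y" "good Y" by blast
    then show "x \<in> {x \<in> (hcube :: (real ^ 'k) set). L x \<in> (hcube :: (real ^ 'm) set)}"
      unfolding hcube_def good_def using Lvv by (auto simp: vv_def)
  qed
  have tc: "tcount L = card {Y. good Y}"
    unfolding tcount_def img by (rule card_image) (rule inj_on_subset[OF inj], simp)
  define I where "I = (UNIV :: 'k set) - {i}"
  have iI: "i \<notin> I" and fI: "finite I" and UI: "insert i I = UNIV" unfolding I_def by auto
  have cI: "card I = CARD('k) - 1" unfolding I_def by (simp add: card_Diff_singleton)
  define G0 where "G0 = {Y. Y \<subseteq> I \<and> good Y}"
  define G1 where "G1 = {Y. Y \<subseteq> I \<and> good (insert i Y)}"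
  define E where "E = {Y. Y \<subseteq> I \<and> \<not> good Y \<and> \<not> good (insert i Y)}"
  define ind where "ind Y = (if good Y then 1 else 0 :: real)" for Y
  have "card {Y. Y \<subseteq> insert i I \<and> ind Y \<noteq> 0} =
    card {Y. Y \<subseteq> I \<and> ind (Y - {i}) \<noteq> 0} + card {Y. Y \<subseteq> I \<and> ind (insert i Y) \<noteq> 0}"
    by (rule count_split[OF iI fI])
  moreover have "{Y. Y \<subseteq> insert i I \<and> ind Y \<noteq> 0} = {Y. good Y}" using UI by (auto simp: ind_def)
  moreover have "{Y. Y \<subseteq> I \<and> ind (Y - {i}) \<noteq> 0} = G0"
  proof -
    have "\<And>Y. Y \<subseteq> I \<Longrightarrow> Y - {i} = Y" using iI by auto
    then show ?thesis by (auto simp: ind_def G0_def)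
  qed
  moreover have "{Y. Y \<subseteq> I \<and> ind (insert i Y) \<noteq> 0} = G1" by (auto simp: ind_def G1_def)
  ultimately have cG: "card {Y. good Y} = card G0 + card G1" by simp
  have disj: "G0 \<inter> G1 = {}"
  proof (rule ccontr)
    assume "G0 \<inter> G1 \<noteq> {}"
    then obtain Y where Y: "Y \<subseteq> I" "good Y" "good (insert i Y)" unfolding G0_def G1_def by blast
    have "i \<notin> Y" using Y iI by auto
    then have "(\<Sum>l\<in>insert i Y. A j l) = A j i + (\<Sum>l\<in>Y. A j l)" by simp
    moreover have "(\<Sum>l\<in>Y. A j l) \<in> {0,1}" "(\<Sum>l\<in>insert i Y. A j l) \<in> {0,1}"
      using Y unfolding good_def by blast+
    ultimately have "A j i \<in> {-1,0,1}" by auto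
    then show False using bad by (simp add: A_def)
  qed
  have PowI: "Pow I = (G0 \<union> G1) \<union> E" unfolding G0_def G1_def E_def by auto
  have fin: "finite G0" "finite G1" "finite E" by simp_all
  have "card (Pow I) = card (G0 \<union> G1) + card E"
    unfolding PowI by (rule card_Un_disjoint) (auto simp: G0_def G1_def E_def)
  moreover have "card (G0 \<union> G1) = card G0 + card G1" by (rule card_Un_disjoint) (use disj in auto)
  moreover have "card (Pow I) = 2 ^ (CARD('k) - 1)" using fI cI by (simp add: card_Pow)
  ultimately have sumeq: "tcount L + card E = 2 ^ (CARD('k) - 1)" using tc cG by simp
  then have "E \<noteq> {}" using assms(3) by auto
  then obtain Y0 where Y0: "Y0 \<subseteq> I" "\<not> good Y0" "\<not> good (insert i Y0)" unfolding E_def by blast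
  obtain r where r: "(\<Sum>l\<in>Y0. A r l) \<notin> {0,1}" using Y0 unfolding good_def by blast
  obtain s where s: "(\<Sum>l\<in>insert i Y0. A s l) \<notin> {0,1}" using Y0 unfolding good_def by blast
  define sg where "sg t Y = (\<Sum>l\<in>I. if l \<in> Y then A t l else 0)" for t Y
  have sgY: "Y \<subseteq> I \<Longrightarrow> sg t Y = (\<Sum>l\<in>Y. A t l)" for t Y
    unfolding sg_def using fI by (simp add: sum.inter_restrict[OF fI, symmetric] Int_absorb1)
  define F where "F Y = (((1 * (0 + sg r Y)) * (-1 + sg r Y)) * (A s i + sg s Y)) * ((A s i - 1) + sg s Y)" for Y
  have cF: "cpoly 4 F"
  proof -
    have c0: "cpoly 0 (\<lambda>Y::'k set. 1::real)" by (rule cpoly.pc)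
    have c1: "cpoly (Suc 0) (\<lambda>Y::'k set. 1 * (0 + sg r Y))"
      using cpoly_affine[OF c0 fI, of 0 "A r"] unfolding sg_def .
    have c2: "cpoly (Suc (Suc 0)) (\<lambda>Y::'k set. (1 * (0 + sg r Y)) * (-1 + sg r Y))"
      using cpoly_affine[OF c1 fI, of "-1" "A r"] unfolding sg_def .
    have c3: "cpoly (Suc (Suc (Suc 0))) (\<lambda>Y::'k set. ((1 * (0 + sg r Y)) * (-1 + sg r Y)) * (A s i + sg s Y))"
      using cpoly_affine[OF c2 fI, of "A s i" "A s"] unfolding sg_def .
    have c4: "cpoly (Suc (Suc (Suc (Suc 0)))) F"
      using cpoly_affine[OF c3 fI, of "A s i - 1" "A s"] unfolding sg_def F_def .
    then show ?thesis by (simp add: numeral_eq_Suc)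
  qed
  have FE: "{Y. Y \<subseteq> I \<and> F Y \<noteq> 0} \<subseteq> E"
  proof
    fix Y assume Y: "Y \<in> {Y. Y \<subseteq> I \<and> F Y \<noteq> 0}"
    then have YI: "Y \<subseteq> I" and nz: "F Y \<noteq> 0" by auto
    have iY: "i \<notin> Y" using YI iI by auto
    have "sg r Y \<noteq> 0" "sg r Y \<noteq> 1" "A s i + sg s Y \<noteq> 0" "A s i + sg s Y \<noteq> 1"
      using nz unfolding F_def by auto
    then have "(\<Sum>l\<in>Y. A r l) \<notin> {0,1}" "(\<Sum>l\<in>insert i Y. A s l) \<notin> {0,1}"
      using sgY[OF YI] iY by auto
    then show "Y \<in> E" using YI unfolding E_def good_def by blast
  qed
  have FY0: "F Y0 \<noteq> 0"
  proof -
    have iY: "i \<notin> Y0" using Y0 iI by auto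
    have "sg r Y0 \<noteq> 0" "sg r Y0 \<noteq> 1" "A s i + sg s Y0 \<noteq> 0" "A s i + sg s Y0 \<noteq> 1"
      using r s sgY[OF Y0(1)] iY by auto
    then show ?thesis unfolding F_def by auto
  qed
  have "2 ^ card I \<le> 2 ^ 4 * card {Y. Y \<subseteq> I \<and> F Y \<noteq> 0}"
    by (rule count_lemma[OF fI cF Y0(1) FY0])
  also have "card {Y. Y \<subseteq> I \<and> F Y \<noteq> 0} \<le> card E" by (rule card_mono[OF fin(3) FE])
  finally have "2 ^ (CARD('k) - 1) \<le> 16 * card E" using cI by simp
  then have "real (2 ^ (CARD('k) - 1)) \<le> 16 * real (card E)" by (metis of_nat_le_iff of_nat_mult of_nat_numeral)
  moreover have "real (tcount L) + real (card E) = 2 ^ (CARD('k) - 1)"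
    using sumeq by (metis of_nat_add of_nat_numeral of_nat_power)
  ultimately show False using assms(2) by simp
qed

end
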